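(* Let $f,h:\mathbb{R}^d\to\mathbb{R}$ be Lipschitz with constants $L_f,L_h$, let $a,b,\eta>0$, $\widetilde Q=\{(x,s,t):h(x)\le as,\ f(x)+as\le bt\}\subset\mathbb{R}^{d+2}$ and $Z_{\widetilde Q}=\int_{\widetilde Q}e^{-bt}\,dp$. Then for every $\tau\ge0$, $$\int_{\mathbb{R}^{d+2}}e^{-bq_{d+2}}\exp\Big(-\frac{(\mathrm{dist}(q,\widetilde Q)-\tau)^2}{2\eta}\Big)dq\le Z_{\widetilde Q}e^{\tau\widetilde C_L}\Big[\widetilde C_L\sqrt{2\pi\eta}\exp\Big(\frac{\eta\widetilde C_L^2}2\Big)+1\Big],$$ where $q_{d+2}$ is the last coordinate of $q$ and $\widetilde C_L=\sqrt{b^2+a^2+L_f^2}+\sqrt{a^2+L_h^2}$. *)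

theory Defs
  imports "HOL-Analysis.Analysis"
begin

end

theory Submission
  imports Defs "HOL-Probability.Probability" "HOL-Real_Asymp.Real_Asymp"
begin


lemma tail_k:
  fixes \<eta> v :: real
  assumes "\<eta> > 0" "v \<ge> 0"
  shows "(\<integral>\<^sup>+u. ennreal (u / \<eta> * exp (- u\<^sup>2 / (2 * \<eta>))) * indicator {v..} u \<partial>lborel)
         = ennreal (exp (- v\<^sup>2 / (2 * \<eta>)))"
proof -
  have "(\<integral>\<^sup>+u. ennreal (u / \<eta> * exp (- u\<^sup>2 / (2 * \<eta>))) * indicator {v..} u \<partial>lborel)
         = ennreal (0 - (- exp (- v\<^sup>2 / (2 * \<eta>))))"
  proof (rule nn_integral_FTC_atLeast)
    show "((\<lambda>x::real. - exp (- x\<^sup>2 / (2 * \<eta>))) \<longlongrightarrow> 0) at_top"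
      using assms(1) by real_asymp
    show "\<And>x. v \<le> x \<Longrightarrow> 0 \<le> x / \<eta> * exp (- x\<^sup>2 / (2 * \<eta>))"
      using assms by auto
    show "\<And>x. v \<le> x \<Longrightarrow> ((\<lambda>x. - exp (- x\<^sup>2 / (2 * \<eta>))) has_real_derivative x / \<eta> * exp (- x\<^sup>2 / (2 * \<eta>))) (at x)"
      using assms by (auto intro!: derivative_eq_intros simp: field_simps)
  qed simp
  then show ?thesis by simp
qed

lemma gauss_bound:
  fixes \<eta> C :: real
  assumes "\<eta> > 0" "C \<ge> 0"
  shows "(\<integral>\<^sup>+u. ennreal (u / \<eta> * exp (- u\<^sup>2 / (2 * \<eta>)) * exp (C * u)) * indicator {0..} u \<partial>lborel)
         \<le> ennreal (1 + C * sqrt (2 * pi * \<eta>) * exp (\<eta> * C\<^sup>2 / 2))"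
proof -
  define k where "k u = u / \<eta> * exp (- u\<^sup>2 / (2 * \<eta>))" for u
  have [measurable]: "k \<in> borel_measurable borel" unfolding k_def by measurable
  have [measurable]: "Measurable.pred (borel \<Otimes>\<^sub>M borel) (\<lambda>x::real\<times>real. snd x \<in> {0..fst x})"
    unfolding atLeastAtMost_iff by measurable
  have [measurable]: "Measurable.pred (borel \<Otimes>\<^sub>M borel) (\<lambda>x::real\<times>real. fst x \<in> {0..snd x})"
    unfolding atLeastAtMost_iff by measurable
  have expC: "ennreal (exp (C * u)) = 1 + (\<integral>\<^sup>+v. ennreal (C * exp (C * v)) * indicator {0..u} v \<partial>lborel)"
    if "u \<ge> 0" for u
  proof -
    have "(\<integral>\<^sup>+v. ennreal (C * exp (C * v)) * indicator {0..u} v \<partial>lborel) = ennreal (exp (C * u) - exp (C * 0))"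
      by (rule nn_integral_FTC_Icc) (use that assms in \<open>auto intro!: derivative_eq_intros\<close>)
    moreover have "exp (C * u) \<ge> 1" using that assms by simp
    then have "ennreal (exp (C * u)) = ennreal 1 + ennreal (exp (C * u) - 1)"
      by (subst ennreal_plus[symmetric]) auto
    ultimately show ?thesis by simp
  qed
  have A: "(\<integral>\<^sup>+u. ennreal (k u * exp (C * u)) * indicator {0..} u \<partial>lborel)
     = (\<integral>\<^sup>+u. ennreal (k u) * indicator {0..} u + (\<integral>\<^sup>+v. ennreal (k u) * indicator {0..} u * (ennreal (C * exp (C * v)) * indicator {0..u} v) \<partial>lborel) \<partial>lborel)"
  proof (rule nn_integral_cong)
    fix u :: real
    show "ennreal (k u * exp (C * u)) * indicator {0..} u = ennreal (k u) * indicator {0..} u + (\<integral>\<^sup>+v. ennreal (k u) * indicator {0..} u * (ennreal (C * exp (C * v)) * indicator {0..u} v) \<partial>lborel)"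
    proof (cases "u \<ge> 0")
      case True
      then have "k u \<ge> 0" using assms unfolding k_def by auto
      then show ?thesis using True
        by (simp add: ennreal_mult expC nn_integral_cmult distrib_left)
    qed simp
  qed
  have C: "(\<integral>\<^sup>+u. ennreal (k u) * indicator {0..} u + (\<integral>\<^sup>+v. ennreal (k u) * indicator {0..} u * (ennreal (C * exp (C * v)) * indicator {0..u} v) \<partial>lborel) \<partial>lborel) = (\<integral>\<^sup>+u. ennreal (k u) * indicator {0..} u \<partial>lborel) + (\<integral>\<^sup>+u. \<integral>\<^sup>+v. ennreal (k u) * indicator {0..} u * (ennreal (C * exp (C * v)) * indicator {0..u} v) \<partial>lborel \<partial>lborel)"
    by (rule nn_integral_add) measurable
  have B: "(\<integral>\<^sup>+u. ennreal (k u) * indicator {0..} u \<partial>lborel) = 1"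
    using tail_k[OF assms(1), of 0] by (simp add: k_def)
  have "(\<integral>\<^sup>+u. \<integral>\<^sup>+v. ennreal (k u) * indicator {0..} u * (ennreal (C * exp (C * v)) * indicator {0..u} v) \<partial>lborel \<partial>lborel)
     = (\<integral>\<^sup>+v. \<integral>\<^sup>+u. ennreal (k u) * indicator {0..} u * (ennreal (C * exp (C * v)) * indicator {0..u} v) \<partial>lborel \<partial>lborel)"
    by (rule lborel_pair.Fubini'[of "\<lambda>v u. ennreal (k u) * indicator {0..} u * (ennreal (C * exp (C * v)) * indicator {0..u} v)"]) measurable
  also have "\<dots> = (\<integral>\<^sup>+v. ennreal (C * exp (C * v)) * indicator {0..} v * ennreal (exp (- v\<^sup>2 / (2 * \<eta>))) \<partial>lborel)"
  proof (rule nn_integral_cong)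
    fix v :: real
    have "(\<integral>\<^sup>+u. ennreal (k u) * indicator {0..} u * (ennreal (C * exp (C * v)) * indicator {0..u} v) \<partial>lborel)
        = (\<integral>\<^sup>+u. (ennreal (C * exp (C * v)) * indicator {0..} v) * (ennreal (k u) * indicator {v..} u) \<partial>lborel)"
      by (rule nn_integral_cong) (auto simp: mult.commute split: split_indicator)
    also have "\<dots> = ennreal (C * exp (C * v)) * indicator {0..} v * (\<integral>\<^sup>+u. ennreal (k u) * indicator {v..} u \<partial>lborel)"
      by (rule nn_integral_cmult) measurable
    also have "\<dots> = ennreal (C * exp (C * v)) * indicator {0..} v * ennreal (exp (- v\<^sup>2 / (2 * \<eta>)))"
    proof (cases "v \<ge> 0")
      case True
      then have "(\<integral>\<^sup>+u. ennreal (k u) * indicator {v..} u \<partial>lborel) = ennreal (exp (- v\<^sup>2 / (2 * \<eta>)))"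
        using tail_k[OF assms(1) True] by (simp add: k_def)
      then show ?thesis by simp
    qed simp
    finally show "(\<integral>\<^sup>+u. ennreal (k u) * indicator {0..} u * (ennreal (C * exp (C * v)) * indicator {0..u} v) \<partial>lborel) = ennreal (C * exp (C * v)) * indicator {0..} v * ennreal (exp (- v\<^sup>2 / (2 * \<eta>)))" .
  qed
  also have "\<dots> \<le> (\<integral>\<^sup>+v. ennreal (C * exp (\<eta> * C\<^sup>2 / 2) * sqrt (2 * pi * \<eta>)) * ennreal (normal_density (\<eta> * C) (sqrt \<eta>) v) \<partial>lborel)"
  proof (rule nn_integral_mono)
    fix v :: real
    have eq: "C * exp (C * v) * exp (- v\<^sup>2 / (2 * \<eta>)) = C * exp (\<eta> * C\<^sup>2 / 2) * sqrt (2 * pi * \<eta>) * normal_density (\<eta> * C) (sqrt \<eta>) v"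
      using assms by (simp add: normal_density_def mult_exp_exp field_simps power2_eq_square real_sqrt_mult)
    then show "ennreal (C * exp (C * v)) * indicator {0..} v * ennreal (exp (- v\<^sup>2 / (2 * \<eta>))) \<le> ennreal (C * exp (\<eta> * C\<^sup>2 / 2) * sqrt (2 * pi * \<eta>)) * ennreal (normal_density (\<eta> * C) (sqrt \<eta>) v)"
    proof (cases "v \<ge> 0")
      case True
      have "ennreal (C * exp (C * v)) * indicator {0..} v * ennreal (exp (- v\<^sup>2 / (2 * \<eta>)))
          = ennreal (C * exp (C * v) * exp (- v\<^sup>2 / (2 * \<eta>)))"
        using True assms by (simp add: ennreal_mult'[symmetric])
      also have "\<dots> = ennreal (C * exp (\<eta> * C\<^sup>2 / 2) * sqrt (2 * pi * \<eta>)) * ennreal (normal_density (\<eta> * C) (sqrt \<eta>) v)"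
        unfolding eq using assms by (simp add: ennreal_mult'[symmetric])
      finally show ?thesis by simp
    qed simp
  qed
  also have "\<dots> = ennreal (C * exp (\<eta> * C\<^sup>2 / 2) * sqrt (2 * pi * \<eta>)) * (\<integral>\<^sup>+v. ennreal (normal_density (\<eta> * C) (sqrt \<eta>) v) \<partial>lborel)"
    by (rule nn_integral_cmult) measurable
  finally have D': "(\<integral>\<^sup>+u. \<integral>\<^sup>+v. ennreal (k u) * indicator {0..} u * (ennreal (C * exp (C * v)) * indicator {0..u} v) \<partial>lborel \<partial>lborel)
     \<le> ennreal (C * exp (\<eta> * C\<^sup>2 / 2) * sqrt (2 * pi * \<eta>)) * (\<integral>\<^sup>+v. ennreal (normal_density (\<eta> * C) (sqrt \<eta>) v) \<partial>lborel)" .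
  have E: "(\<integral>\<^sup>+v. ennreal (normal_density (\<eta> * C) (sqrt \<eta>) v) \<partial>lborel) = 1"
    using assms by (subst nn_integral_eq_integral) (auto intro!: integrable_normal_density integral_normal_density)
  have fin: "(\<integral>\<^sup>+u. ennreal (k u * exp (C * u)) * indicator {0..} u \<partial>lborel)
      \<le> 1 + ennreal (C * exp (\<eta> * C\<^sup>2 / 2) * sqrt (2 * pi * \<eta>))"
    unfolding A C B using D' unfolding E by (simp add: add_left_mono)
  have "1 + ennreal (C * exp (\<eta> * C\<^sup>2 / 2) * sqrt (2 * pi * \<eta>)) = ennreal (1 + C * sqrt (2 * pi * \<eta>) * exp (\<eta> * C\<^sup>2 / 2))"
    using assms by (subst ennreal_plus) (auto simp: mult_ac)
  with fin show ?thesis unfolding k_def by simp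
qed



lemma cs2: fixes x1 y1 u1 v1 :: real shows "x1 * u1 + y1 * v1 \<le> sqrt (x1\<^sup>2+y1\<^sup>2) * sqrt (u1\<^sup>2+v1\<^sup>2)"
proof -
  have "(x1 * u1 + y1 * v1)\<^sup>2 \<le> (x1\<^sup>2+y1\<^sup>2) * (u1\<^sup>2+v1\<^sup>2)"
    using sum_squares_ge_zero[of "x1 * v1 - y1 * u1" 0] by (simp add: power2_eq_square algebra_simps)
  then have "sqrt ((x1 * u1 + y1 * v1)\<^sup>2) \<le> sqrt ((x1\<^sup>2+y1\<^sup>2) * (u1\<^sup>2+v1\<^sup>2))" by (rule real_sqrt_le_mono)
  then show ?thesis by (simp add: real_sqrt_mult)
qed

lemma cs3: fixes x1 y1 z1 u1 v1 w1 :: real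
  shows "x1 * u1 + y1 * v1 + z1 * w1 \<le> sqrt (x1\<^sup>2+y1\<^sup>2+z1\<^sup>2) * sqrt (u1\<^sup>2+v1\<^sup>2+w1\<^sup>2)"
proof -
  have "(x1 * u1 + y1 * v1 + z1 * w1)\<^sup>2 \<le> (x1\<^sup>2+y1\<^sup>2+z1\<^sup>2) * (u1\<^sup>2+v1\<^sup>2+w1\<^sup>2)"
  proof -
    have "0 \<le> (x1 * v1 - y1 * u1)\<^sup>2 + (x1 * w1 - z1 * u1)\<^sup>2 + (y1 * w1 - z1 * v1)\<^sup>2" by simp
    then show ?thesis by (simp add: power2_eq_square algebra_simps)
  qed
  then have "sqrt ((x1 * u1 + y1 * v1 + z1 * w1)\<^sup>2) \<le> sqrt ((x1\<^sup>2+y1\<^sup>2+z1\<^sup>2) * (u1\<^sup>2+v1\<^sup>2+w1\<^sup>2))" by (rule real_sqrt_le_mono)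
  then show ?thesis by (simp add: real_sqrt_mult)
qed

lemma meas_snd_snd[measurable]: "(\<lambda>q::'a::euclidean_space\<times>real\<times>real. snd (snd q)) \<in> borel_measurable borel"
  by (intro borel_measurable_continuous_onI continuous_intros)
lemma meas_fst_snd[measurable]: "(\<lambda>q::'a::euclidean_space\<times>real\<times>real. fst (snd q)) \<in> borel_measurable borel"
  by (intro borel_measurable_continuous_onI continuous_intros)
lemma meas_fst[measurable]: "(\<lambda>q::'a::euclidean_space\<times>real\<times>real. fst q) \<in> borel_measurable borel"
  by (intro borel_measurable_continuous_onI continuous_intros)

lemma translate_integral:
  fixes S :: "('a::euclidean_space \<times> real \<times> real) set" and v :: "'a \<times> real \<times> real" and b :: real
  assumes [measurable]: "S \<in> sets borel"
  shows "(\<integral>\<^sup>+q. ennreal (exp (- b * snd (snd q))) * indicator S (q + v) \<partial>lborel)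
       = ennreal (exp (b * snd (snd v))) * (\<integral>\<^sup>+q. ennreal (exp (- b * snd (snd q))) * indicator S q \<partial>lborel)"
proof -
  define F where "F q = ennreal (exp (- b * (snd (snd q) - snd (snd v)))) * indicator S q" for q
  have [measurable]: "F \<in> borel_measurable borel" unfolding F_def by measurable
  have "(\<integral>\<^sup>+q. F q \<partial>lborel) = (\<integral>\<^sup>+q. F q \<partial>(distr lborel borel ((+) v)))"
    by (simp add: lborel_distr_plus)
  also have "\<dots> = (\<integral>\<^sup>+q. F (v + q) \<partial>lborel)"
    by (rule nn_integral_distr) auto
  also have "\<dots> = (\<integral>\<^sup>+q. ennreal (exp (- b * snd (snd q))) * indicator S (q + v) \<partial>lborel)"
    unfolding F_def by (simp add: add.commute)
  finally have 1: "(\<integral>\<^sup>+q. ennreal (exp (- b * snd (snd q))) * indicator S (q + v) \<partial>lborel) = (\<integral>\<^sup>+q. F q \<partial>lborel)" ..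
  have "(\<integral>\<^sup>+q. F q \<partial>lborel) = (\<integral>\<^sup>+q. ennreal (exp (b * snd (snd v))) * (ennreal (exp (- b * snd (snd q))) * indicator S q) \<partial>lborel)"
  proof (rule nn_integral_cong)
    fix q :: "'a \<times> real \<times> real"
    have "exp (- b * (snd (snd q) - snd (snd v))) = exp (b * snd (snd v)) * exp (- b * snd (snd q))"
      by (simp add: mult_exp_exp algebra_simps)
    then show "F q = ennreal (exp (b * snd (snd v))) * (ennreal (exp (- b * snd (snd q))) * indicator S q)"
      unfolding F_def by (simp add: ennreal_mult' mult.assoc)
  qed
  also have "\<dots> = ennreal (exp (b * snd (snd v))) * (\<integral>\<^sup>+q. ennreal (exp (- b * snd (snd q))) * indicator S q \<partial>lborel)"
    by (rule nn_integral_cmult) measurable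
  finally show ?thesis using 1 by simp
qed


theorem lemma26:
  fixes f h :: "'a::euclidean_space \<Rightarrow> real"
    and Lf Lh a b \<eta> \<tau> :: real
  assumes "Lf-lipschitz_on UNIV f" and "Lh-lipschitz_on UNIV h"
    and "a > 0" and "b > 0" and "\<eta> > 0" and "\<tau> \<ge> 0"
  defines "Q \<equiv> {(x :: 'a, s, t). h x \<le> a * s \<and> f x + a * s \<le> b * t}"
    and "C \<equiv> sqrt (b\<^sup>2 + a\<^sup>2 + Lf\<^sup>2) + sqrt (a\<^sup>2 + Lh\<^sup>2)"
  shows "(\<integral>\<^sup>+ q. ennreal (exp (- b * snd (snd q)) * exp (- ((infdist q Q - \<tau>)\<^sup>2) / (2 * \<eta>))) \<partial>lborel)
    \<le> (\<integral>\<^sup>+ p. ennreal (exp (- b * snd (snd p))) * indicator Q p \<partial>lborel)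
       * ennreal (exp (\<tau> * C) * (C * sqrt (2 * pi * \<eta>) * exp (\<eta> * C\<^sup>2 / 2) + 1))"
proof -
  note Lf = assms(1) and Lh = assms(2) and apos = assms(3) and bpos = assms(4)
  have Lf0: "Lf \<ge> 0" using lipschitz_on_nonneg[OF Lf] .
  have Lh0: "Lh \<ge> 0" using lipschitz_on_nonneg[OF Lh] .
  have [measurable]: "f \<in> borel_measurable borel"
    by (rule borel_measurable_continuous_onI[OF lipschitz_on_continuous_on[OF Lf]])
  have [measurable]: "h \<in> borel_measurable borel"
    by (rule borel_measurable_continuous_onI[OF lipschitz_on_continuous_on[OF Lh]])
  define c1 where "c1 = sqrt (a\<^sup>2 + Lh\<^sup>2)"
  define c2 where "c2 = sqrt (b\<^sup>2 + a\<^sup>2 + Lf\<^sup>2)"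
  have C_eq: "C = c2 + c1" unfolding C_def c1_def c2_def ..
  have c1pos: "c1 > 0" unfolding c1_def using apos by (intro real_sqrt_gt_zero add_pos_nonneg) auto
  have c2pos: "c2 > 0" unfolding c2_def using bpos by (intro real_sqrt_gt_zero add_pos_nonneg) auto
  have C0: "C \<ge> 0" using c1pos c2pos C_eq by simp
  have Q_eq: "Q = {q. h (fst q) \<le> a * fst (snd q) \<and> f (fst q) + a * fst (snd q) \<le> b * snd (snd q)}"
    unfolding Q_def by auto
  have Q_meas[measurable]: "Q \<in> sets borel" unfolding Q_eq by measurable
  have Qne: "Q \<noteq> {}"
  proof -
    have "(0, h 0 / a, (f 0 + h 0) / b) \<in> Q" unfolding Q_def using apos bpos by auto
    then show ?thesis by auto
  qed
  define d where "d q = infdist q Q" for q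
  have d_meas[measurable]: "d \<in> borel_measurable borel"
    unfolding d_def by (intro borel_measurable_continuous_onI continuous_on_infdist continuous_intros)
  have distq: "dist (x, s, t) (x', s', t') = sqrt ((dist x x')\<^sup>2 + (s - s')\<^sup>2 + (t - t')\<^sup>2)"
    for x x' :: 'a and s s' t t' :: real
    by (simp add: dist_Pair_Pair dist_real_def add.assoc)
  have g1: "h (fst q) - a * fst (snd q) \<le> c1 * d q" for q
  proof -
    have "(h (fst q) - a * fst (snd q)) / c1 \<le> dist q p" if "p \<in> Q" for p
    proof -
      obtain x s t where q: "q = (x, s, t)" by (cases q) auto
      obtain x' s' t' where p: "p = (x', s', t')" by (cases p) auto
      have hp: "h x' \<le> a * s'" using that unfolding p Q_def by auto
      have "h x - h x' \<le> Lh * dist x x'"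
        using lipschitz_onD[OF Lh, of x x'] by (simp add: dist_real_def)
      moreover have "a * s' - a * s \<le> a * \<bar>s - s'\<bar>" using apos
        by (simp add: right_diff_distrib[symmetric] abs_if)
      ultimately have "h x - a * s \<le> Lh * dist x x' + a * \<bar>s - s'\<bar>" using hp by linarith
      also have "\<dots> \<le> sqrt (Lh\<^sup>2 + a\<^sup>2) * sqrt ((dist x x')\<^sup>2 + \<bar>s - s'\<bar>\<^sup>2)" by (rule cs2)
      also have "\<dots> \<le> c1 * dist q p"
        unfolding q p distq c1_def
        by (intro mult_mono real_sqrt_le_mono) (auto simp: add_ac)
      finally show ?thesis using c1pos unfolding q by (simp add: pos_divide_le_eq mult.commute)
    qed
    then have "(h (fst q) - a * fst (snd q)) / c1 \<le> d q"
      unfolding d_def infdist_notempty[OF Qne] by (intro cINF_greatest Qne) auto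
    then show ?thesis using c1pos by (simp add: pos_divide_le_eq mult.commute)
  qed
  have g2: "f (fst q) + a * fst (snd q) - b * snd (snd q) \<le> c2 * d q" for q
  proof -
    have "(f (fst q) + a * fst (snd q) - b * snd (snd q)) / c2 \<le> dist q p" if "p \<in> Q" for p
    proof -
      obtain x s t where q: "q = (x, s, t)" by (cases q) auto
      obtain x' s' t' where p: "p = (x', s', t')" by (cases p) auto
      have fp: "f x' + a * s' \<le> b * t'" using that unfolding p Q_def by auto
      have "f x - f x' \<le> Lf * dist x x'"
        using lipschitz_onD[OF Lf, of x x'] by (simp add: dist_real_def)
      moreover have "a * s - a * s' \<le> a * \<bar>s - s'\<bar>" using apos
        by (simp add: right_diff_distrib[symmetric] abs_if)
      moreover have "b * t' - b * t \<le> b * \<bar>t - t'\<bar>" using bpos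
        by (simp add: right_diff_distrib[symmetric] abs_if)
      ultimately have "f x + a * s - b * t \<le> Lf * dist x x' + a * \<bar>s - s'\<bar> + b * \<bar>t - t'\<bar>" using fp by linarith
      also have "\<dots> \<le> sqrt (Lf\<^sup>2 + a\<^sup>2 + b\<^sup>2) * sqrt ((dist x x')\<^sup>2 + \<bar>s - s'\<bar>\<^sup>2 + \<bar>t - t'\<bar>\<^sup>2)" by (rule cs3)
      also have "\<dots> = c2 * dist q p"
        unfolding q p distq c2_def by (simp add: add_ac)
      finally show ?thesis using c2pos unfolding q by (simp add: pos_divide_le_eq mult.commute)
    qed
    then have "(f (fst q) + a * fst (snd q) - b * snd (snd q)) / c2 \<le> d q"
      unfolding d_def infdist_notempty[OF Qne] by (intro cINF_greatest Qne) auto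
    then show ?thesis using c2pos by (simp add: pos_divide_le_eq mult.commute)
  qed
  define sh where "sh r = ((0::'a), c1 * r / a, C * r / b)" for r
  have shift: "q + sh r \<in> Q" if "d q \<le> r" for q r
  proof -
    obtain x s t where q: "q = (x, s, t)" by (cases q) auto
    have r1: "c1 * d q \<le> c1 * r" using that c1pos by simp
    have r2: "c2 * d q \<le> c2 * r" using that c2pos by simp
    have e1: "a * (s + c1 * r / a) = a * s + c1 * r" using apos by (simp add: field_simps)
    have e2: "b * (t + C * r / b) = b * t + C * r" using bpos by (simp add: field_simps)
    show ?thesis using g1[of q] g2[of q] r1 r2 e1 e2 unfolding q sh_def Q_def C_eq
      by (auto simp: algebra_simps)
  qed
  define Z where "Z = (\<integral>\<^sup>+ p. ennreal (exp (- b * snd (snd p))) * indicator Q p \<partial>lborel)"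
  have muQ: "(\<integral>\<^sup>+q. ennreal (exp (- b * snd (snd q))) * indicator {q. d q \<le> r} q \<partial>lborel) \<le> ennreal (exp (C * r)) * Z" for r
  proof -
    have "(\<integral>\<^sup>+q. ennreal (exp (- b * snd (snd q))) * indicator {q. d q \<le> r} q \<partial>lborel)
       \<le> (\<integral>\<^sup>+q. ennreal (exp (- b * snd (snd q))) * indicator Q (q + sh r) \<partial>lborel)"
      by (intro nn_integral_mono) (auto split: split_indicator dest: shift)
    also have "\<dots> = ennreal (exp (b * snd (snd (sh r)))) * Z"
      unfolding Z_def by (rule translate_integral[OF Q_meas])
    also have "b * snd (snd (sh r)) = C * r" unfolding sh_def using bpos by simp
    finally show ?thesis .
  qed
  define k where "k u = u / \<eta> * exp (- u\<^sup>2 / (2 * \<eta>))" for u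
  have k_meas[measurable]: "k \<in> borel_measurable borel" unfolding k_def by measurable
  define G where "G q u = ennreal (exp (- b * snd (snd q))) * (ennreal (k u) * indicator {0..} u * indicator {u. d q \<le> \<tau> + u} u)" for q u
  have pw: "ennreal (exp (- b * snd (snd q)) * exp (- ((infdist q Q - \<tau>)\<^sup>2) / (2 * \<eta>))) \<le> (\<integral>\<^sup>+u. G q u \<partial>lborel)" for q
  proof -
    define m where "m = max 0 (d q - \<tau>)"
    have "(\<integral>\<^sup>+u. ennreal (k u) * indicator {0..} u * indicator {u. d q \<le> \<tau> + u} u \<partial>lborel)
        = (\<integral>\<^sup>+u. ennreal (k u) * indicator {m..} u \<partial>lborel)"
      by (intro nn_integral_cong) (auto simp: m_def split: split_indicator)
    also have "\<dots> = ennreal (exp (- m\<^sup>2 / (2 * \<eta>)))"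
      unfolding k_def by (rule tail_k) (use assms(5) in \<open>auto simp: m_def\<close>)
    finally have I: "(\<integral>\<^sup>+u. ennreal (k u) * indicator {0..} u * indicator {u. d q \<le> \<tau> + u} u \<partial>lborel) = ennreal (exp (- m\<^sup>2 / (2 * \<eta>)))" .
    have "m\<^sup>2 \<le> (d q - \<tau>)\<^sup>2" unfolding m_def by (auto simp: max_def power2_eq_square)
    then have "- ((d q - \<tau>)\<^sup>2) / (2 * \<eta>) \<le> - m\<^sup>2 / (2 * \<eta>)"
      using assms(5) by (intro divide_right_mono) auto
    then have le: "exp (- ((infdist q Q - \<tau>)\<^sup>2) / (2 * \<eta>)) \<le> exp (- m\<^sup>2 / (2 * \<eta>))"
      unfolding d_def by simp
    have "(\<integral>\<^sup>+u. G q u \<partial>lborel) = ennreal (exp (- b * snd (snd q))) * (\<integral>\<^sup>+u. ennreal (k u) * indicator {0..} u * indicator {u. d q \<le> \<tau> + u} u \<partial>lborel)"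
      unfolding G_def by (rule nn_integral_cmult) measurable
    also have "\<dots> = ennreal (exp (- b * snd (snd q)) * exp (- m\<^sup>2 / (2 * \<eta>)))"
      unfolding I by (simp add: ennreal_mult')
    finally show ?thesis using le by (simp add: ennreal_leI)
  qed
  have G_meas: "case_prod G \<in> borel_measurable (lborel \<Otimes>\<^sub>M lborel)"
    unfolding G_def by measurable
  have "(\<integral>\<^sup>+ q. ennreal (exp (- b * snd (snd q)) * exp (- ((infdist q Q - \<tau>)\<^sup>2) / (2 * \<eta>))) \<partial>lborel)
      \<le> (\<integral>\<^sup>+q. \<integral>\<^sup>+u. G q u \<partial>lborel \<partial>lborel)"
    by (intro nn_integral_mono pw)
  also have "\<dots> = (\<integral>\<^sup>+u. \<integral>\<^sup>+q. G q u \<partial>lborel \<partial>lborel)"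
    by (rule lborel_pair.Fubini'[symmetric]) (rule G_meas)
  also have "\<dots> \<le> (\<integral>\<^sup>+u. (Z * ennreal (exp (C * \<tau>))) * (ennreal (k u * exp (C * u)) * indicator {0..} u) \<partial>lborel)"
  proof (rule nn_integral_mono)
    fix u :: real
    have "(\<integral>\<^sup>+q. G q u \<partial>lborel) = (\<integral>\<^sup>+q. (ennreal (k u) * indicator {0..} u) * (ennreal (exp (- b * snd (snd q))) * indicator {q. d q \<le> \<tau> + u} q) \<partial>lborel)"
      unfolding G_def by (intro nn_integral_cong) (auto simp: mult_ac split: split_indicator)
    also have "\<dots> = (ennreal (k u) * indicator {0..} u) * (\<integral>\<^sup>+q. ennreal (exp (- b * snd (snd q))) * indicator {q. d q \<le> \<tau> + u} q \<partial>lborel)"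
      by (rule nn_integral_cmult) measurable
    also have "\<dots> \<le> (ennreal (k u) * indicator {0..} u) * (ennreal (exp (C * (\<tau> + u))) * Z)"
      by (intro mult_left_mono muQ) auto
    also have "\<dots> = (Z * ennreal (exp (C * \<tau>))) * (ennreal (k u * exp (C * u)) * indicator {0..} u)"
    proof (cases "u \<ge> 0")
      case True
      then have "k u \<ge> 0" unfolding k_def using assms(5) by auto
      have ee: "ennreal (exp (C * (\<tau> + u))) = ennreal (exp (C * \<tau>)) * ennreal (exp (C * u))"
        by (simp add: ennreal_mult' distrib_left exp_add)
      show ?thesis using \<open>k u \<ge> 0\<close> unfolding ee
        by (simp add: ennreal_mult' mult_ac)
    qed simp
    finally show "(\<integral>\<^sup>+q. G q u \<partial>lborel) \<le> (Z * ennreal (exp (C * \<tau>))) * (ennreal (k u * exp (C * u)) * indicator {0..} u)" .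
  qed
  also have "\<dots> = (Z * ennreal (exp (C * \<tau>))) * (\<integral>\<^sup>+u. ennreal (k u * exp (C * u)) * indicator {0..} u \<partial>lborel)"
    by (rule nn_integral_cmult) measurable
  also have "\<dots> \<le> (Z * ennreal (exp (C * \<tau>))) * ennreal (1 + C * sqrt (2 * pi * \<eta>) * exp (\<eta> * C\<^sup>2 / 2))"
    by (intro mult_left_mono) (use gauss_bound[OF assms(5) C0] in \<open>auto simp: k_def\<close>)
  also have "\<dots> = Z * ennreal (exp (\<tau> * C) * (C * sqrt (2 * pi * \<eta>) * exp (\<eta> * C\<^sup>2 / 2) + 1))"
    using C0 by (simp add: ennreal_mult' mult.assoc mult.commute add.commute)
  finally show ?thesis unfolding Z_def .
qed

end
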